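(* Let $q_0,\dots,q_{T-1}\in\mathcal S^{d-1}$ be a fixed sequence of recommendations spanning $\mathbb{R}^d$, and let step sizes be either constant $\eta_t=\eta$ or decreasing $\eta_t=\frac{\eta}{t+s}$. Define $\Phi_0=I$, $\Phi_{t+1}=(I+\eta_tq_tq_t^\top)\Phi_t$, and $F_T:\mathcal S^{d-1}\to\mathbb{R}^T$ by \[F_T(p_0)=\left(\frac{q_0^\top\Phi_0p_0}{\|\Phi_0p_0\|},\dots,\frac{q_{T-1}^\top\Phi_{T-1}p_0}{\|\Phi_{T-1}p_0\|}\right),\] which is the sequence of affinities $y_t=q_t^\top p_t$ generated by the dynamics $\tilde p_{t+1}=p_t+\eta_t(p_t^\top q_t)q_t$, $p_{t+1}=\tilde p_{t+1}/\|\tilde p_{t+1}\|_2$ from initial preference $p_0$. Then $F_T$ is locally invertible around every $p_0\in\mathcal S^{d-1}$: its differential at $p_0$, as a linear map from the tangent space of $\mathcal S^{d-1}$ at $p_0$ to $\mathbb{R}^T$, is injective.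
   Context: $\mathcal S^{d-1}$ is the unit sphere in $\mathbb{R}^d$, viewed as a smooth manifold. In the constant step-size setting $\eta>0$; in the decreasing setting $\eta,s$ are positive integers. *)

theory Defs
  imports "HOL-Analysis.Analysis"
begin

definition outer :: "real^'d \<Rightarrow> real^'d^'d" where
  "outer q = (\<chi> i j. q $ i * q $ j)"

fun Phi :: "(nat \<Rightarrow> real^'d) \<Rightarrow> (nat \<Rightarrow> real) \<Rightarrow> nat \<Rightarrow> real^'d^'d" where
  "Phi q eta 0 = mat 1"
| "Phi q eta (Suc t) = (mat 1 + eta t *\<^sub>R outer (q t)) ** Phi q eta t"

text \<open>t-th component of F_T: p \<mapsto> q_t^T Phi_t p / |Phi_t p| (defined on R^d minus 0;
  its restriction to the sphere is the map F_T of the paper).\<close>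
definition Fcomp :: "(nat \<Rightarrow> real^'d) \<Rightarrow> (nat \<Rightarrow> real) \<Rightarrow> nat \<Rightarrow> real^'d \<Rightarrow> real" where
  "Fcomp q eta t p = (q t \<bullet> (Phi q eta t *v p)) / norm (Phi q eta t *v p)"

definition admissible_steps :: "(nat \<Rightarrow> real) \<Rightarrow> bool" where
  "admissible_steps eta \<longleftrightarrow>
     (\<exists>c::real. c > 0 \<and> (\<forall>t. eta t = c)) \<or>
     (\<exists>a s::nat. a > 0 \<and> s > 0 \<and> (\<forall>t. eta t = real a / (real t + real s)))"

end

theory Submission
  imports Defs
begin

lemma outer_mv: "(mat 1 + e *\<^sub>R outer q) *v y = y + (e * (q \<bullet> y)) *\<^sub>R (q::real^'d)"
proof -
  have "(e *\<^sub>R outer q) *v y = (e * (q \<bullet> y)) *\<^sub>R q"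
    by (simp add: vec_eq_iff matrix_vector_mult_def outer_def inner_vec_def sum_distrib_left sum_distrib_right mult_ac)
  then show ?thesis by (simp add: matrix_vector_mult_add_rdistrib)
qed

lemma Phi_Suc_mv: "Phi q eta (Suc t) *v x = Phi q eta t *v x + (eta t * (q t \<bullet> (Phi q eta t *v x))) *\<^sub>R q t"
  unfolding Phi.simps matrix_vector_mul_assoc[symmetric] outer_mv ..

lemma norm_step: assumes "e \<ge> 0" shows "norm y \<le> norm (y + (e * ((q::real^'d) \<bullet> y)) *\<^sub>R q)"
proof -
  have "(y + (e * (q \<bullet> y)) *\<^sub>R q) \<bullet> (y + (e * (q \<bullet> y)) *\<^sub>R q) = y \<bullet> y + (2*e + e^2 * (q \<bullet> q)) * (q \<bullet> y)^2"
    by (simp add: inner_add_left inner_add_right inner_commute algebra_simps power2_eq_square)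
  also have "\<dots> \<ge> y \<bullet> y" using assms by (intro add_increasing2) auto
  finally show ?thesis by (simp add: norm_eq_sqrt_inner)
qed

lemma Phi_norm: assumes "\<forall>t. eta t \<ge> 0" shows "norm x \<le> norm (Phi q eta t *v x)"
proof (induction t)
  case 0 then show ?case by simp
next
  case (Suc t) then show ?case using norm_step[OF assms[rule_format, of t], of "Phi q eta t *v x" "q t"]
    by (metis Phi_Suc_mv order_trans)
qed

lemma der:
  fixes A :: "real^'d^'d" assumes "A *v p \<noteq> 0"
  shows "((\<lambda>p. (c \<bullet> (A *v p)) / norm (A *v p)) has_derivative
     (\<lambda>h. ((c \<bullet> (A *v h)) * norm (A *v p) - (c \<bullet> (A *v p)) * ((A *v h) \<bullet> sgn (A *v p))) / (norm (A *v p) * norm (A *v p)))) (at p)"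
proof -
  have lin: "((\<lambda>p. A *v p) has_derivative (\<lambda>h. A *v h)) (at p)"
    by (simp add: bounded_linear_imp_has_derivative)
  have f: "((\<lambda>p. c \<bullet> (A *v p)) has_derivative (\<lambda>h. c \<bullet> (A *v h))) (at p)"
    using bounded_linear.has_derivative[OF bounded_linear_inner_right lin] .
  have g: "((\<lambda>p. norm (A *v p)) has_derivative (\<lambda>h. (A *v h) \<bullet> sgn (A *v p))) (at p)"
    using has_derivative_compose[OF lin has_derivative_norm[OF assms]] by simp
  show ?thesis using has_derivative_divide'[OF f g] assms by simp
qed

theorem proposition7:
  fixes q :: "nat \<Rightarrow> real^'d" and eta :: "nat \<Rightarrow> real" and T :: nat and p0 :: "real^'d"
  assumes unit: "\<forall>t<T. norm (q t) = 1"
    and spans: "span (q ` {..<T}) = UNIV"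
    and steps: "admissible_steps eta"
    and p0: "norm p0 = 1"
  shows "\<exists>D :: nat \<Rightarrow> real^'d \<Rightarrow> real.
           (\<forall>t<T. (Fcomp q eta t has_derivative D t) (at p0)) \<and>
           (\<forall>v. v \<bullet> p0 = 0 \<and> (\<forall>t<T. D t v = 0) \<longrightarrow> v = 0)"
proof -
  have epos: "\<forall>t. eta t \<ge> 0" using steps unfolding admissible_steps_def
    by (auto intro: divide_nonneg_nonneg)
  define A where "A t = Phi q eta t" for t
  have nz: "A t *v p0 \<noteq> 0" for t
    using Phi_norm[OF epos, of p0 q t] p0 unfolding A_def by auto
  define D where "D t h = ((q t \<bullet> (A t *v h)) * norm (A t *v p0) - (q t \<bullet> (A t *v p0)) * ((A t *v h) \<bullet> sgn (A t *v p0))) / (norm (A t *v p0) * norm (A t *v p0))" for t h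
  have d: "(Fcomp q eta t has_derivative D t) (at p0)" for t
  proof -
    have "Fcomp q eta t = (\<lambda>p. (q t \<bullet> (A t *v p)) / norm (A t *v p))"
      by (simp add: fun_eq_iff Fcomp_def A_def)
    then show ?thesis using der[OF nz[of t], of "q t"] unfolding D_def by simp
  qed
  have inj: "v = 0" if v: "v \<bullet> p0 = 0" and z: "\<forall>t<T. D t v = 0" for v
  proof -
    have ind: "t \<le> T \<longrightarrow> A t *v v = v \<and> (A t *v p0) \<bullet> v = 0 \<and> (\<forall>s<t. q s \<bullet> v = 0)" for t
    proof (induction t)
      case 0 then show ?case using v by (simp add: A_def inner_commute)
    next
      case (Suc t)
      show ?case
      proof
        assume le: "Suc t \<le> T"
        with Suc have ih: "A t *v v = v" "(A t *v p0) \<bullet> v = 0" "\<forall>s<t. q s \<bullet> v = 0" by auto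
        have "D t v = 0" using z le by auto
        then have "(q t \<bullet> v) * norm (A t *v p0) = 0"
          using ih nz[of t] by (simp add: D_def sgn_div_norm inner_commute)
        then have qv: "q t \<bullet> v = 0" using nz[of t] by simp
        have e1: "A (Suc t) *v v = v" using qv ih(1) unfolding A_def by (simp only: Phi_Suc_mv) simp
        have e2: "(A (Suc t) *v p0) \<bullet> v = (A t *v p0) \<bullet> v + (eta t * (q t \<bullet> (A t *v p0))) * (q t \<bullet> v)"
          unfolding A_def by (simp only: Phi_Suc_mv inner_add_left inner_scaleR_left)
        have e3: "\<forall>s<Suc t. q s \<bullet> v = 0" using ih(3) qv less_Suc_eq by auto
        show "A (Suc t) *v v = v \<and> (A (Suc t) *v p0) \<bullet> v = 0 \<and> (\<forall>s<Suc t. q s \<bullet> v = 0)"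
          using e1 e2 e3 ih(2) qv by simp
      qed
    qed
    have "\<forall>s<T. q s \<bullet> v = 0" using ind[of T] by simp
    then have "\<forall>x\<in>q ` {..<T}. x \<bullet> v = 0" by auto
    then have "orthogonal v y" if "y \<in> q ` {..<T}" for y
      using that by (auto simp: orthogonal_def inner_commute)
    then have "orthogonal v v" using orthogonal_to_span[of v "q ` {..<T}" v] spans by blast
    then have "v \<bullet> v = 0" by (simp add: orthogonal_def)
    then show ?thesis by simp
  qed
  show ?thesis using d inj by blast
qed

end
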